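(* Let $p$ be a prime and $(K,|\cdot|)$ an algebraically closed ultrametric field of residue characteristic $p$. Let $q\ge1$ be an integer not divisible by $p$ and $\lambda\in K$ with $|\lambda|=1$ such that $\widetilde\lambda$ has order $q$ in $\widetilde K^*$. Let $f(z)=\lambda z+\cdots\in\mathcal{O}_K[[z]]$. (1) If $\mathrm{wideg}(f^q(z)-z)=q+1$ and $\lambda^q\ne1$, then $f$ has a unique periodic orbit in $\mathfrak{m}_K\setminus\{0\}$ of minimal period $q$, and every point $w_0$ of this orbit satisfies $|w_0|=|\lambda^q-1|^{1/q}$. (2) Let $n\ge1$ be an integer and suppose $\mathrm{wideg}\left(\frac{f^{qp^n}(z)-z}{f^{qp^{n-1}}(z)-z}\right)=qp^n$ and that every periodic point $z_0\in\mathfrak{m}_K$ of $f$ of period $qp^{n-1}$ satisfies $(f^{qp^n})'(z_0)\ne1$. Then $f$ has a unique cycle of minimal period $qp^n$, and this cycle is optimal, i.e., each of its points $z_0$ satisfies $|z_0|=\left|\frac{\lambda^{qp^n}-1}{\lambda^{qp^{n-1}}-1}\right|^{1/(qp^n)}$.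
   Context: $\mathcal{O}_K=\{|z|\le1\}$, $\mathfrak{m}_K=\{|z|<1\}$, $\widetilde K=\mathcal{O}_K/\mathfrak{m}_K$. Periodic points are taken in $\mathfrak{m}_K$. For $h\in\mathcal{O}_K[[z]]$, $\mathrm{wideg}(h)$ is the order (lowest degree of a nonzero term) of its reduction in $\widetilde K[[\zeta]]$. The power series $f^{qp^{n-1}}(z)-z$ divides $f^{qp^n}(z)-z$ in $\mathcal{O}_K[[z]]$. *)

theory Defs
  imports "HOL-Computational_Algebra.Computational_Algebra" "HOL-Library.Extended_Nat"
begin

definition ultrametric_abs :: "('a::field \<Rightarrow> real) \<Rightarrow> bool" where
  "ultrametric_abs av \<longleftrightarrow>
     (\<forall>x. 0 \<le> av x) \<and> (\<forall>x. av x = 0 \<longleftrightarrow> x = 0) \<and>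
     (\<forall>x y. av (x * y) = av x * av y) \<and>
     (\<forall>x y. av (x + y) \<le> max (av x) (av y))"

definition complete_abs :: "('a::field \<Rightarrow> real) \<Rightarrow> bool" where
  "complete_abs av \<longleftrightarrow>
     (\<forall>s::nat \<Rightarrow> 'a. (\<forall>e>0. \<exists>N. \<forall>m\<ge>N. \<forall>n\<ge>N. av (s m - s n) < e) \<longrightarrow>
        (\<exists>L. (\<lambda>n. av (s n - L)) \<longlonglongrightarrow> 0))"

definition alg_closed_field :: "'a::field itself \<Rightarrow> bool" where
  "alg_closed_field _ \<longleftrightarrow> (\<forall>P :: 'a poly. degree P \<ge> 1 \<longrightarrow> (\<exists>x. poly P x = 0))"

definition val_ring :: "('a::field \<Rightarrow> real) \<Rightarrow> 'a set" where
  "val_ring av = {z. av z \<le> 1}"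

definition max_ideal :: "('a::field \<Rightarrow> real) \<Rightarrow> 'a set" where
  "max_ideal av = {z. av z < 1}"

definition integral_fps :: "('a::field \<Rightarrow> real) \<Rightarrow> 'a fps \<Rightarrow> bool" where
  "integral_fps av h \<longleftrightarrow> (\<forall>n. av (fps_nth h n) \<le> 1)"

text \<open>Weierstrass degree: order of the reduction modulo m_K (infinity if the reduction is 0).\<close>
definition wideg :: "('a::field \<Rightarrow> real) \<Rightarrow> 'a fps \<Rightarrow> enat" where
  "wideg av h = (if \<exists>n. \<not> av (fps_nth h n) < 1
                 then enat (LEAST n. \<not> av (fps_nth h n) < 1) else \<infinity>)"

definition fps_converges_to :: "('a::field \<Rightarrow> real) \<Rightarrow> 'a fps \<Rightarrow> 'a \<Rightarrow> 'a \<Rightarrow> bool" where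
  "fps_converges_to av h z w \<longleftrightarrow>
     (\<lambda>N. av ((\<Sum>k<N. fps_nth h k * z ^ k) - w)) \<longlonglongrightarrow> 0"

definition fps_value :: "('a::field \<Rightarrow> real) \<Rightarrow> 'a fps \<Rightarrow> 'a \<Rightarrow> 'a" where
  "fps_value av h z = (THE w. fps_converges_to av h z w)"

definition fps_iter :: "'a::field fps \<Rightarrow> nat \<Rightarrow> 'a fps" where
  "fps_iter f n = ((\<lambda>g. f oo g) ^^ n) fps_X"

definition periodic_pt :: "('a::field \<Rightarrow> real) \<Rightarrow> 'a fps \<Rightarrow> nat \<Rightarrow> 'a \<Rightarrow> bool" where
  "periodic_pt av f m z \<longleftrightarrow> z \<in> max_ideal av \<and> ((fps_value av f) ^^ m) z = z"

definition minimal_period :: "('a::field \<Rightarrow> real) \<Rightarrow> 'a fps \<Rightarrow> nat \<Rightarrow> 'a \<Rightarrow> bool" where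
  "minimal_period av f m z \<longleftrightarrow> m \<ge> 1 \<and> periodic_pt av f m z \<and>
     (\<forall>k. 1 \<le> k \<and> k < m \<longrightarrow> \<not> periodic_pt av f k z)"

definition orbit :: "('a::field \<Rightarrow> real) \<Rightarrow> 'a fps \<Rightarrow> 'a \<Rightarrow> 'a set" where
  "orbit av f z = {((fps_value av f) ^^ k) z | k. True}"

end

theory Submission
  imports Defs
begin


definition psum :: "'a::field fps \<Rightarrow> 'a \<Rightarrow> nat \<Rightarrow> 'a" where
  "psum F z N = (\<Sum>k<N. F$k * z^k)"

locale VF =
  fixes av :: "'a::field \<Rightarrow> real"
  assumes ultra: "ultrametric_abs av"
    and compl: "complete_abs av"
begin

lemma av_nonneg[simp]: "0 \<le> av x" using ultra unfolding ultrametric_abs_def by blast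
lemma av_eq_0[simp]: "av x = 0 \<longleftrightarrow> x = 0" using ultra unfolding ultrametric_abs_def by blast
lemma av_mult[simp]: "av (x*y) = av x * av y" using ultra unfolding ultrametric_abs_def by blast
lemma av_add: "av (x+y) \<le> max (av x) (av y)" using ultra unfolding ultrametric_abs_def by blast
lemma av_pos[simp]: "0 < av x \<longleftrightarrow> x \<noteq> 0" using av_nonneg[of x] av_eq_0[of x] by linarith
lemma av_0[simp]: "av 0 = 0" by simp
lemma av_1[simp]: "av 1 = 1"
proof -
  have "av 1 = av 1 * av 1" using av_mult[of 1 1] by simp
  moreover have "av 1 \<noteq> 0" by simp
  ultimately show ?thesis by (metis mult_cancel_left1)
qed
lemma av_minus1: "av (-1) = 1"
proof -
  have h: "av (-1) * av (-1) = 1" using av_mult[of "-1" "-1"] by simp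
  have "(av (-1) - 1) * (av (-1) + 1) = 0" using h by (simp add: algebra_simps)
  moreover have "av (-1) + 1 > 0" using av_nonneg[of "-1"] by linarith
  ultimately show ?thesis by simp
qed
lemma av_uminus[simp]: "av (-x) = av x"
  using av_mult[of "-1" x] av_minus1 by simp
lemma av_diff_commute: "av (x - y) = av (y - x)"
  by (metis av_uminus minus_diff_eq)
lemma av_diff: "av (x - y) \<le> max (av x) (av y)"
  using av_add[of x "-y"] by simp
lemma av_add_strict: assumes "av x < av y" shows "av (x + y) = av y"
proof -
  have "av y = av ((x+y) + (-x))" by simp
  also have "\<dots> \<le> max (av (x+y)) (av x)" using av_add[of "x+y" "-x"] by simp
  finally have "av y \<le> av (x+y)" using assms by linarith
  moreover have "av (x+y) \<le> av y" using av_add[of x y] assms by linarith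
  ultimately show ?thesis by linarith
qed
lemma maxle: "(m::real) \<le> max u v \<Longrightarrow> 0 \<le> u \<Longrightarrow> 0 \<le> v \<Longrightarrow> v \<le> c \<Longrightarrow> m \<le> u + c"
  by (auto simp: max_def split: if_splits)
lemma maxle2: "(m::real) \<le> max u v \<Longrightarrow> u \<le> c \<Longrightarrow> v \<le> c \<Longrightarrow> m \<le> c"
  by (auto simp: max_def split: if_splits)
lemma maxle3: "(m::real) \<le> max u v \<Longrightarrow> u < c \<Longrightarrow> v < c \<Longrightarrow> m < c"
  by (auto simp: max_def split: if_splits)
lemma av_power[simp]: "av (x^n) = av x ^ n" by (induction n) auto
lemma av_prod: "av (prod g S) = (\<Prod>i\<in>S. av (g i))"
  by (induction S rule: infinite_finite_induct) auto
lemma av_sum_le: assumes "finite S" "0 \<le> c" "\<And>i. i\<in>S \<Longrightarrow> av (g i) \<le> c"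
  shows "av (sum g S) \<le> c"
  using assms
proof (induction S rule: finite_induct)
  case (insert x F)
  have "av (sum g (insert x F)) = av (g x + sum g F)" using insert by simp
  also have "\<dots> \<le> max (av (g x)) (av (sum g F))" by (rule av_add)
  finally have m: "av (sum g (insert x F)) \<le> max (av (g x)) (av (sum g F))" .
  show ?case by (rule maxle2[OF m]) (use insert in auto)
qed simp
lemma av_sum_less: assumes "finite S" "0 < c" "\<And>i. i\<in>S \<Longrightarrow> av (g i) < c"
  shows "av (sum g S) < c"
  using assms
proof (induction S rule: finite_induct)
  case (insert x F)
  have "av (sum g (insert x F)) = av (g x + sum g F)" using insert by simp
  also have "\<dots> \<le> max (av (g x)) (av (sum g F))" by (rule av_add)
  finally have m: "av (sum g (insert x F)) \<le> max (av (g x)) (av (sum g F))" .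
  show ?case by (rule maxle3[OF m]) (use insert in auto)
qed simp
lemma av_of_nat_le: "av (of_nat n) \<le> 1"
proof (induction n)
  case (Suc n)
  have "av (of_nat (Suc n)) = av (1 + of_nat n)" by simp
  also have "\<dots> \<le> max (av 1) (av (of_nat n))" by (rule av_add)
  finally show ?case using Suc by simp
qed simp
lemma av_divide: "av (x / y) = av x / av y"
proof (cases "y = 0")
  case False
  have "av x = av (x / y) * av y" using av_mult[of "x/y" y] False by simp
  then show ?thesis using False by simp
qed simp

lemma small_zero: assumes "\<And>k. av x \<le> e ^ k" "e < 1" shows "x = 0"
proof (rule ccontr)
  assume "x \<noteq> 0"
  then have p: "av x > 0" by simp
  then have "e > 0" using assms(1)[of 1] by (metis power_one_right order_less_le_trans)
  obtain k where "e ^ k < av x" using real_arch_pow_inv[OF p assms(2)] by blast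
  then show False using assms(1)[of k] by linarith
qed

lemma lim_unique:
  assumes "(\<lambda>n. av (s n - a)) \<longlonglongrightarrow> 0" "(\<lambda>n. av (s n - b)) \<longlonglongrightarrow> 0"
  shows "a = b"
proof -
  have t: "(\<lambda>n. av (s n - a) + av (s n - b)) \<longlonglongrightarrow> 0"
    using tendsto_add[OF assms] by simp
  have "\<forall>n. av (a - b) \<le> av (s n - a) + av (s n - b)"
  proof
    fix n
    have "a - b = (s n - b) - (s n - a)" by simp
    then have "av (a - b) \<le> max (av (s n - b)) (av (s n - a))" using av_diff by metis
    then show "av (a - b) \<le> av (s n - a) + av (s n - b)"
      using maxle[of _ "av (s n - a)" "av (s n - b)" "av (s n - b)"] by (simp add: max.commute)
  qed
  then have "av (a - b) \<le> 0" using LIMSEQ_le_const[OF t] by blast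
  then show ?thesis using av_nonneg[of "a-b"] by simp
qed

lemma lim_bound:
  assumes "(\<lambda>n. av (s n - L)) \<longlonglongrightarrow> 0" "\<And>n. n \<ge> N \<Longrightarrow> av (s n - a) \<le> c"
  shows "av (L - a) \<le> c"
proof -
  have t: "(\<lambda>n. av (s n - L) + c) \<longlonglongrightarrow> 0 + c"
    using tendsto_add[OF assms(1) tendsto_const] .
  have "\<forall>n\<ge>N. av (L - a) \<le> av (s n - L) + c"
  proof (intro allI impI)
    fix n assume "n \<ge> N"
    have "L - a = (s n - a) - (s n - L)" by simp
    then have "av (L - a) \<le> max (av (s n - a)) (av (s n - L))" using av_diff by metis
    then show "av (L - a) \<le> av (s n - L) + c"
      using maxle[of _ "av (s n - L)" "av (s n - a)" c] assms(2)[OF \<open>n \<ge> N\<close>] by (simp add: max.commute)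
  qed
  then show ?thesis using LIMSEQ_le_const[OF t] by auto
qed

abbreviation I where "I \<equiv> integral_fps av"

lemma I_nth: "I F \<Longrightarrow> av (F$n) \<le> 1" unfolding integral_fps_def by blast
lemma I_intro: "(\<And>n. av (F$n) \<le> 1) \<Longrightarrow> I F" unfolding integral_fps_def by blast
lemma I_0[simp]: "I 0" by (rule I_intro) simp
lemma I_1[simp]: "I 1" by (rule I_intro) simp
lemma I_X[simp]: "I fps_X" by (rule I_intro) (simp add: fps_X_def)
lemma I_const: "av c \<le> 1 \<Longrightarrow> I (fps_const c)" by (rule I_intro) simp
lemma I_add: "I F \<Longrightarrow> I G \<Longrightarrow> I (F + G)"
  by (rule I_intro) (metis (no_types, lifting) I_nth av_add fps_add_nth max.bounded_iff order_trans)
lemma I_uminus: "I F \<Longrightarrow> I (- F)"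
  by (rule I_intro) (simp add: I_nth)
lemma I_diff: "I F \<Longrightarrow> I G \<Longrightarrow> I (F - G)"
  using I_add[of F "-G"] I_uminus[of G] by simp
lemma I_mult: assumes "I F" "I G" shows "I (F * G)"
proof (rule I_intro)
  fix n
  show "av ((F*G)$n) \<le> 1" unfolding fps_mult_nth
    by (rule av_sum_le) (auto intro!: mult_le_one I_nth assms)
qed
lemma I_power: "I F \<Longrightarrow> I (F ^ n)" by (induction n) (auto intro: I_mult)
lemma I_sum: "(\<And>i. i \<in> S \<Longrightarrow> I (g i)) \<Longrightarrow> I (sum g S)"
  by (induction S rule: infinite_finite_induct) (auto intro: I_add)
lemma I_compose: assumes "I F" "I G" shows "I (F oo G)"
proof (rule I_intro)
  fix n
  show "av ((F oo G)$n) \<le> 1" unfolding fps_compose_nth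
    by (rule av_sum_le) (auto intro!: mult_le_one I_nth assms I_power)
qed
lemma I_shift: "I F \<Longrightarrow> I (fps_shift k F)" by (rule I_intro) (simp add: I_nth)
lemma I_deriv: assumes "I F" shows "I (fps_deriv F)"
proof (rule I_intro)
  fix n
  have "av (of_nat (n+1) :: 'a) \<le> 1" by (rule av_of_nat_le)
  then show "av (fps_deriv F $ n) \<le> 1" using I_nth[OF assms, of "n+1"]
    by (simp add: mult_le_one del: of_nat_add)
qed

lemma psum_diff_bound:
  assumes "I F" "av z < 1" "N \<le> M"
  shows "av (psum F z M - psum F z N) \<le> av z ^ N"
proof -
  have "psum F z M - psum F z N = (\<Sum>k\<in>{N..<M}. F$k * z^k)"
    unfolding psum_def using assms(3)
    by (metis add_diff_cancel_left' lessThan_atLeast0 sum.atLeastLessThan_concat zero_le)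
  also have "av \<dots> \<le> av z ^ N"
  proof (rule av_sum_le)
    fix k assume k: "k \<in> {N..<M}"
    have "av (F$k * z^k) = av (F$k) * av z ^ k" by simp
    also have "\<dots> \<le> 1 * av z ^ k" by (rule mult_right_mono) (auto intro: I_nth assms)
    also have "\<dots> \<le> av z ^ N" using k assms(2) by (simp add: power_decreasing)
    finally show "av (F$k * z^k) \<le> av z ^ N" .
  qed auto
  finally show ?thesis .
qed

lemma value_conv:
  assumes "I F" "av z < 1"
  shows "fps_converges_to av F z (fps_value av F z)"
proof -
  have cau: "\<forall>e>0. \<exists>N. \<forall>m\<ge>N. \<forall>n\<ge>N. av (psum F z m - psum F z n) < e"
  proof (intro allI impI)
    fix e :: real assume "e > 0"
    then obtain N where N: "av z ^ N < e" using real_arch_pow_inv assms(2) by blast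
    have "\<forall>m\<ge>N. \<forall>n\<ge>N. av (psum F z m - psum F z n) < e"
    proof (intro allI impI)
      fix m n assume mn: "m \<ge> N" "n \<ge> N"
      have "av (psum F z m - psum F z n) \<le> av z ^ min m n"
      proof (cases "n \<le> m")
        case True then show ?thesis using psum_diff_bound[OF assms True] by simp
      next
        case False then show ?thesis using psum_diff_bound[OF assms, of m n] av_diff_commute by simp
      qed
      also have "\<dots> \<le> av z ^ N" using mn assms(2) by (simp add: power_decreasing)
      finally show "av (psum F z m - psum F z n) < e" using N by linarith
    qed
    then show "\<exists>N. \<forall>m\<ge>N. \<forall>n\<ge>N. av (psum F z m - psum F z n) < e" by blast
  qed
  have "\<exists>L. (\<lambda>n. av (psum F z n - L)) \<longlonglongrightarrow> 0"
    using compl cau unfolding complete_abs_def by blast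
  then obtain L where L: "fps_converges_to av F z L"
    unfolding fps_converges_to_def psum_def by blast
  have "fps_converges_to av F z (THE w. fps_converges_to av F z w)"
  proof (rule theI[of _ L])
    show "fps_converges_to av F z L" by fact
    fix w assume "fps_converges_to av F z w"
    then show "w = L" using L unfolding fps_converges_to_def by (metis lim_unique)
  qed
  then show ?thesis unfolding fps_value_def .
qed

lemma value_tail:
  assumes "I F" "av z < 1"
  shows "av (fps_value av F z - psum F z N) \<le> av z ^ N"
  using value_conv[OF assms] unfolding fps_converges_to_def psum_def[symmetric]
  by (rule lim_bound) (use psum_diff_bound[OF assms] in auto)

lemma value_unique:
  assumes "I F" "av z < 1" "\<And>N. av (w - psum F z N) \<le> av z ^ N"
  shows "fps_value av F z = w"
proof -
  have "av (fps_value av F z - w) \<le> av z ^ N" for N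
  proof -
    have "fps_value av F z - w = (fps_value av F z - psum F z N) - (w - psum F z N)" by simp
    then have "av (fps_value av F z - w) \<le> max (av (fps_value av F z - psum F z N)) (av (w - psum F z N))"
      by (metis av_diff)
    then show ?thesis using value_tail[OF assms(1,2), of N] assms(3)[of N] by linarith
  qed
  then show ?thesis using small_zero[of "fps_value av F z - w" "av z"] assms(2) by simp
qed

lemma value_bound: "I F \<Longrightarrow> av z < 1 \<Longrightarrow> av (fps_value av F z) \<le> 1"
  using value_tail[of F z 0] by (simp add: psum_def)

lemma value_add: assumes "I F" "I G" "av z < 1"
  shows "fps_value av (F + G) z = fps_value av F z + fps_value av G z"
proof (rule value_unique)
  show "I (F+G)" using assms by (simp add: I_add)
  fix N
  have "psum (F+G) z N = psum F z N + psum G z N" unfolding psum_def by (simp add: sum.distrib algebra_simps)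
  then have eq: "fps_value av F z + fps_value av G z - psum (F+G) z N =
     (fps_value av F z - psum F z N) + (fps_value av G z - psum G z N)" by simp
  show "av (fps_value av F z + fps_value av G z - psum (F+G) z N) \<le> av z ^ N"
    unfolding eq by (rule maxle2[OF av_add value_tail[OF assms(1,3), of N] value_tail[OF assms(2,3), of N]])
qed (fact assms)

lemma value_cmult: assumes "I F" "av c \<le> 1" "av z < 1"
  shows "fps_value av (fps_const c * F) z = c * fps_value av F z"
proof (rule value_unique)
  show "I (fps_const c * F)" using assms by (simp add: I_mult I_const)
  fix N
  have "psum (fps_const c * F) z N = c * psum F z N" unfolding psum_def by (simp add: sum_distrib_left algebra_simps)
  then have "av (c * fps_value av F z - psum (fps_const c * F) z N) = av c * av (fps_value av F z - psum F z N)"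
    by (simp add: algebra_simps flip: av_mult)
  also have "\<dots> \<le> 1 * av z ^ N" by (rule mult_mono) (use assms value_tail[OF assms(1,3)] in auto)
  finally show "av (c * fps_value av F z - psum (fps_const c * F) z N) \<le> av z ^ N" by simp
qed (fact assms)

lemma value_uminus: assumes "I F" "av z < 1"
  shows "fps_value av (- F) z = - fps_value av F z"
proof -
  have "- F = fps_const (-1) * F" by (rule fps_ext) simp
  then show ?thesis using value_cmult[OF assms(1) _ assms(2), of "-1"] av_minus1 by simp
qed

lemma value_diff: assumes "I F" "I G" "av z < 1"
  shows "fps_value av (F - G) z = fps_value av F z - fps_value av G z"
  using value_add[OF assms(1) I_uminus[OF assms(2)] assms(3)] value_uminus[OF assms(2,3)] by simp

lemma psum_X_mult: "psum (fps_X * F) z (Suc N) = z * psum F z N"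
  unfolding psum_def sum.lessThan_Suc_shift
  by (simp add: fps_X_mult_nth sum_distrib_left algebra_simps del: sum.lessThan_Suc)

lemma value_X_mult: assumes "I F" "av z < 1"
  shows "fps_value av (fps_X * F) z = z * fps_value av F z"
proof (rule value_unique)
  show "I (fps_X * F)" using assms by (simp add: I_mult)
  fix N
  show "av (z * fps_value av F z - psum (fps_X * F) z N) \<le> av z ^ N"
  proof (cases N)
    case 0
    then show ?thesis using value_bound[OF assms] assms(2)
      by (simp add: psum_def mult_le_one)
  next
    case (Suc M)
    have "av (z * fps_value av F z - psum (fps_X * F) z N) = av z * av (fps_value av F z - psum F z M)"
      using Suc by (simp add: psum_X_mult flip: av_mult right_diff_distrib)
    also have "\<dots> \<le> av z * av z ^ M" by (rule mult_left_mono) (use value_tail[OF assms] in auto)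
    finally show ?thesis using Suc by simp
  qed
qed (fact assms)

lemma value_const: assumes "av c \<le> 1" "av z < 1" shows "fps_value av (fps_const c) z = c"
proof (rule value_unique)
  show "I (fps_const c)" using assms by (simp add: I_const)
  fix N
  show "av (c - psum (fps_const c) z N) \<le> av z ^ N"
  proof (cases N)
    case 0 then show ?thesis using assms by (simp add: psum_def)
  next
    case (Suc M)
    have "psum (fps_const c) z N = c" unfolding psum_def using Suc
      by (simp add: sum.lessThan_Suc_shift del: sum.lessThan_Suc)
    then show ?thesis by simp
  qed
qed (fact assms)

lemma value_0[simp]: "av z < 1 \<Longrightarrow> fps_value av 0 z = 0"
  using value_const[of 0 z] by simp
lemma value_1[simp]: "av z < 1 \<Longrightarrow> fps_value av 1 z = 1"
  using value_const[of 1 z] by simp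
lemma value_X[simp]: "av z < 1 \<Longrightarrow> fps_value av fps_X z = z"
  using value_X_mult[of 1 z] by simp

lemma fps_decomp: "(F::'a fps) = fps_const (F$0) + fps_X * fps_shift 1 F"
proof (rule fps_ext)
  fix n show "F $ n = (fps_const (F$0) + fps_X * fps_shift 1 F) $ n"
    by (cases n) (simp_all del: fps_mult_nth_1' add: fps_X_mult_nth)
qed

lemma value_decomp: assumes "I F" "av z < 1"
  shows "fps_value av F z = F$0 + z * fps_value av (fps_shift 1 F) z"
proof -
  have "fps_value av F z = fps_value av (fps_const (F$0) + fps_X * fps_shift 1 F) z"
    using fps_decomp[of F] by simp
  also have "\<dots> = F$0 + z * fps_value av (fps_shift 1 F) z"
    using assms by (simp add: value_add I_const I_nth I_mult I_shift value_const value_X_mult)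
  finally show ?thesis .
qed

lemma value_at0: "I F \<Longrightarrow> fps_value av F 0 = F$0"
  using value_decomp[of F 0] by simp

lemma value_small: assumes "I F" "av z < 1" "F$0 = 0"
  shows "av (fps_value av F z) \<le> av z"
proof -
  have "av (fps_value av F z) = av z * av (fps_value av (fps_shift 1 F) z)"
    using value_decomp[OF assms(1,2)] assms(3) by simp
  also have "\<dots> \<le> av z * 1" by (rule mult_left_mono) (use value_bound[OF I_shift[OF assms(1)] assms(2)] in auto)
  finally show ?thesis by simp
qed

lemma value_mult: assumes "I A" "I B" "av z < 1"
  shows "fps_value av (A * B) z = fps_value av A z * fps_value av B z"
proof -
  have "\<forall>A. I A \<longrightarrow> av (fps_value av (A * B) z - fps_value av A z * fps_value av B z) \<le> av z ^ M" for M
  proof (induction M)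
    case 0
    show ?case
    proof (intro allI impI)
      fix A assume A: "I A"
      have "av (fps_value av (A * B) z - fps_value av A z * fps_value av B z)
        \<le> max (av (fps_value av (A * B) z)) (av (fps_value av A z * fps_value av B z))" by (rule av_diff)
      also have "\<dots> \<le> 1" using value_bound[OF I_mult[OF A assms(2)] assms(3)]
          value_bound[OF A assms(3)] value_bound[OF assms(2,3)] by (simp add: mult_le_one)
      finally show "av (fps_value av (A * B) z - fps_value av A z * fps_value av B z) \<le> av z ^ 0" by simp
    qed
  next
    case (Suc M)
    show ?case
    proof (intro allI impI)
      fix A assume A: "I A"
      define A' where "A' = fps_shift 1 A"
      have A': "I A'" using A by (simp add: A'_def I_shift)
      have "A * B = fps_const (A$0) * B + fps_X * (A' * B)"
        using fps_decomp[of A] unfolding A'_def by (metis distrib_right mult.assoc)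
      then have "fps_value av (A * B) z = A$0 * fps_value av B z + z * fps_value av (A' * B) z"
        using A A' assms by (simp add: value_add value_cmult I_nth I_mult I_const value_X_mult)
      moreover have "fps_value av A z = A$0 + z * fps_value av A' z"
        using value_decomp[OF A assms(3)] A'_def by simp
      ultimately have "fps_value av (A * B) z - fps_value av A z * fps_value av B z
          = z * (fps_value av (A' * B) z - fps_value av A' z * fps_value av B z)"
        by (simp add: algebra_simps)
      then have "av (fps_value av (A * B) z - fps_value av A z * fps_value av B z)
          = av z * av (fps_value av (A' * B) z - fps_value av A' z * fps_value av B z)" by simp
      also have "\<dots> \<le> av z * av z ^ M" by (rule mult_left_mono) (use Suc A' in auto)
      finally show "av (fps_value av (A * B) z - fps_value av A z * fps_value av B z) \<le> av z ^ Suc M"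
        by simp
    qed
  qed
  then show ?thesis using small_zero[of _ "av z"] assms by (metis eq_iff_diff_eq_0)
qed

lemma value_compose: assumes "I F" "I G" "G$0 = 0" "av z < 1"
  shows "fps_value av (F oo G) z = fps_value av F (fps_value av G z)"
proof -
  define y where "y = fps_value av G z"
  have y: "av y < 1" using value_small[OF assms(2,4,3)] assms(4) unfolding y_def by linarith
  have "\<forall>F. I F \<longrightarrow> av (fps_value av (F oo G) z - fps_value av F y) \<le> av y ^ M" for M
  proof (induction M)
    case 0
    show ?case
    proof (intro allI impI)
      fix F assume F: "I F"
      have "av (fps_value av (F oo G) z - fps_value av F y)
        \<le> max (av (fps_value av (F oo G) z)) (av (fps_value av F y))" by (rule av_diff)
      also have "\<dots> \<le> 1" using value_bound[OF I_compose[OF F assms(2)] assms(4)]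
          value_bound[OF F y] by simp
      finally show "av (fps_value av (F oo G) z - fps_value av F y) \<le> av y ^ 0" by simp
    qed
  next
    case (Suc M)
    show ?case
    proof (intro allI impI)
      fix F assume F: "I F"
      define F' where "F' = fps_shift 1 F"
      have F': "I F'" using F by (simp add: F'_def I_shift)
      have "F oo G = (fps_const (F$0) + fps_X * F') oo G"
        using fps_decomp[of F] unfolding F'_def by simp
      also have "\<dots> = fps_const (F$0) + G * (F' oo G)"
        using assms(3) by (simp add: fps_compose_add_distrib fps_compose_mult_distrib)
      finally have "fps_value av (F oo G) z = F$0 + y * fps_value av (F' oo G) z"
        using F F' assms unfolding y_def
        by (simp add: value_add value_mult I_nth I_mult I_const I_compose value_const)
      moreover have "fps_value av F y = F$0 + y * fps_value av F' y"
        using value_decomp[OF F y] F'_def by simp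
      ultimately have "fps_value av (F oo G) z - fps_value av F y
          = y * (fps_value av (F' oo G) z - fps_value av F' y)"
        by (simp add: algebra_simps)
      then have "av (fps_value av (F oo G) z - fps_value av F y)
          = av y * av (fps_value av (F' oo G) z - fps_value av F' y)" by simp
      also have "\<dots> \<le> av y * av y ^ M" by (rule mult_left_mono) (use Suc F' in auto)
      finally show "av (fps_value av (F oo G) z - fps_value av F y) \<le> av y ^ Suc M"
        by simp
    qed
  qed
  then show ?thesis using small_zero[of _ "av y"] assms(1) y unfolding y_def by (metis eq_iff_diff_eq_0)
qed

lemma value_poly: assumes "\<And>i. av (coeff P i) \<le> 1" "av z < 1"
  shows "I (fps_of_poly P) \<and> fps_value av (fps_of_poly P) z = poly P z"
  using assms(1)
proof (induction P rule: pCons_induct)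
  case 0 then show ?case using assms(2) by simp
next
  case (pCons c p)
  have c: "av c \<le> 1" using pCons.prems[of 0] by simp
  have "\<And>i. av (coeff p i) \<le> 1" using pCons.prems[of "Suc _"] by simp
  then have ih: "I (fps_of_poly p)" "fps_value av (fps_of_poly p) z = poly p z" using pCons.IH by auto
  have e: "fps_of_poly (pCons c p) = fps_const c + fps_X * fps_of_poly p"
    by (simp add: fps_of_poly_pCons mult.commute)
  show ?case unfolding e using ih c assms(2)
    by (simp add: I_add I_const I_mult value_add value_const value_X_mult)
qed

end


context VF begin

lemma av_inverse_1: "av x = 1 \<Longrightarrow> av (inverse x) = 1"
  using av_divide[of 1 x] by (simp add: inverse_eq_divide)

lemma I_inverse: assumes V: "I V" and V0: "av (V$0) = 1" shows "I (inverse V)"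
proof -
  define Vi where "Vi = inverse V"
  have V0': "V$0 \<noteq> 0" using V0 by auto
  have e: "Vi * V = 1" unfolding Vi_def using V0' by (rule inverse_mult_eq_1)
  have "av (Vi$n) \<le> 1" for n
  proof (induction n rule: less_induct)
    case (less n)
    show ?case
    proof (cases n)
      case 0 then show ?thesis using V0 by (simp add: Vi_def av_inverse_1)
    next
      case (Suc m)
      have "0 = (Vi * V) $ n" using e Suc by simp
      also have "\<dots> = (\<Sum>i=0..m. Vi$i * V$(n-i)) + Vi$n * V$0"
        unfolding fps_mult_nth Suc sum.atLeast0_atMost_Suc by simp
      finally have "Vi$n * V$0 = - (\<Sum>i=0..m. Vi$i * V$(n-i))" by (simp add: eq_neg_iff_add_eq_0 add.commute)
      then have "av (Vi$n) = av (\<Sum>i=0..m. Vi$i * V$(n-i))"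
        using V0 by (metis av_mult av_uminus mult.right_neutral)
      also have "\<dots> \<le> 1"
        by (rule av_sum_le) (use less Suc I_nth[OF V] in \<open>auto intro!: mult_le_one\<close>)
      finally show ?thesis .
    qed
  qed
  then show ?thesis unfolding Vi_def by (rule I_intro)
qed


lemma weier_prep:
  fixes h :: "'a fps"
  assumes hI: "I h" and hd: "av (h$d) = 1" and hl: "\<And>i. i < d \<Longrightarrow> av (h$i) < 1"
  shows "\<exists>U P. I U \<and> av (U$0) = 1 \<and> (\<forall>i. av (coeff P i) \<le> 1) \<and> (\<forall>i<d. av (coeff P i) < 1)
     \<and> degree P = d \<and> coeff P d = 1 \<and> h = U * fps_of_poly P"
proof -
  define \<epsilon> where "\<epsilon> = Max (insert 0 ((\<lambda>i. av (h$i)) ` {..<d}))"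
  have eps0: "0 \<le> \<epsilon>" unfolding \<epsilon>_def by simp
  have eps1: "\<epsilon> < 1" unfolding \<epsilon>_def using hl by (auto simp: Max_less_iff)
  have epsh: "av (h$i) \<le> \<epsilon>" if "i < d" for i unfolding \<epsilon>_def using that by (intro Max_ge) auto
  define A :: "'a fps" where "A = Abs_fps (\<lambda>i. if i < d then h$i else 0)"
  define B where "B = fps_shift d h"
  have hAB: "h = A + fps_X^d * B"
    by (rule fps_ext) (simp add: A_def B_def fps_X_power_mult_nth)
  have AI: "av (A$i) \<le> \<epsilon>" for i using epsh eps0 by (simp add: A_def)
  have BI: "I B" using hI by (simp add: B_def I_shift)
  have B0: "av (B$0) = 1" using hd by (simp add: B_def)
  define Bi where "Bi = inverse B"
  have BiI: "I Bi" unfolding Bi_def by (rule I_inverse[OF BI B0])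
  have BiB: "Bi * B = 1" unfolding Bi_def using B0 by (intro inverse_mult_eq_1) auto
  have Bi0: "av (Bi$0) = 1" unfolding Bi_def using B0 by (simp add: av_inverse_1)
  define C where "C = Bi * A"
  have CI: "av (C$n) \<le> \<epsilon>" for n
    unfolding C_def fps_mult_nth
  proof (rule av_sum_le)
    fix i
    have "av (Bi$i) * av (A$(n-i)) \<le> 1 * \<epsilon>"
      by (rule mult_mono) (use I_nth[OF BiI] AI eps0 in auto)
    then show "av (Bi $ i * A $ (n - i)) \<le> \<epsilon>" by simp
  qed (use eps0 in auto)
  define T where "T Y = fps_shift d (Y * C)" for Y :: "'a fps"
  have Tb: "av (T Y $ n) \<le> \<epsilon> * r" if "0 \<le> r" "\<And>m. av (Y$m) \<le> r" for Y r n
    unfolding T_def fps_shift_nth fps_mult_nth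
  proof (rule av_sum_le)
    fix i
    have "av (Y$i) * av (C$(n+d-i)) \<le> r * \<epsilon>"
      by (rule mult_mono) (use that CI eps0 in auto)
    then show "av (Y $ i * C $ (n + d - i)) \<le> \<epsilon> * r" by (simp add: mult.commute)
  qed (use that eps0 in auto)
  have Tdiff: "T Y - T Z = T (Y - Z)" for Y Z unfolding T_def by (simp add: fps_shift_diff algebra_simps)
  define Ws where "Ws k = ((\<lambda>Y. 1 - T Y) ^^ k) 1" for k
  have Ws0: "Ws 0 = 1" and WsS: "Ws (Suc k) = 1 - T (Ws k)" for k by (simp_all add: Ws_def)
  have Wsb: "av (Ws k $ n) \<le> 1" for k n
  proof (induction k arbitrary: n)
    case 0 then show ?case by (simp add: Ws0)
  next
    case (Suc k)
    have "av ((1 - T (Ws k)) $ n) \<le> max (av ((1::'a fps) $ n)) (av (T (Ws k) $ n))"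
      by (simp only: fps_sub_nth av_diff)
    moreover have "av (T (Ws k) $ n) \<le> \<epsilon> * 1" by (rule Tb) (use Suc in auto)
    moreover have "av ((1::'a fps) $ n) \<le> 1" by simp
    ultimately show ?case unfolding WsS using eps1 by (auto intro: maxle2)
  qed
  have Wsd: "av ((Ws (Suc k) - Ws k) $ n) \<le> \<epsilon> ^ Suc k" for k n
  proof (induction k arbitrary: n)
    case 0
    have "Ws (Suc 0) - Ws 0 = - T 1" by (simp add: WsS Ws0)
    then show ?case using Tb[of 1 1 n] by simp
  next
    case (Suc k)
    have "Ws (Suc (Suc k)) - Ws (Suc k) = - T (Ws (Suc k) - Ws k)"
      by (simp add: WsS flip: Tdiff)
    moreover have "av (T (Ws (Suc k) - Ws k) $ n) \<le> \<epsilon> * \<epsilon> ^ Suc k"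
      by (rule Tb) (use Suc eps0 in \<open>auto intro: mult_nonneg_nonneg\<close>)
    ultimately show ?case by simp
  qed
  have Wsc: "av ((Ws m - Ws k) $ n) \<le> \<epsilon> ^ Suc k" if "k \<le> m" for k m n
    using that
  proof (induction m rule: dec_induct)
    case base then show ?case using eps0 by simp
  next
    case (step m)
    have "(Ws (Suc m) - Ws k) $ n = (Ws (Suc m) - Ws m) $ n + (Ws m - Ws k) $ n" by simp
    then have "av ((Ws (Suc m) - Ws k) $ n) \<le> max (av ((Ws (Suc m) - Ws m) $ n)) (av ((Ws m - Ws k) $ n))"
      by (metis av_add)
    moreover have "\<epsilon> ^ Suc m \<le> \<epsilon> ^ Suc k" using step eps0 eps1 by (intro power_decreasing) auto
    ultimately show ?case using Wsd[of m n] step.IH by (auto intro: maxle2)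
  qed
  have "\<exists>L. (\<lambda>k. av (Ws k $ n - L)) \<longlonglongrightarrow> 0" for n
  proof -
    have "\<forall>e>0. \<exists>N. \<forall>m\<ge>N. \<forall>k\<ge>N. av (Ws m $ n - Ws k $ n) < e"
    proof (intro allI impI)
      fix e :: real assume "e > 0"
      then obtain N where N: "\<epsilon> ^ N < e" using real_arch_pow_inv eps1 by blast
      have "\<forall>m\<ge>N. \<forall>k\<ge>N. av (Ws m $ n - Ws k $ n) < e"
      proof (intro allI impI)
        fix m k assume mk: "m \<ge> N" "k \<ge> N"
        have "av (Ws m $ n - Ws k $ n) \<le> \<epsilon> ^ Suc (min m k)"
        proof (cases "k \<le> m")
          case True then show ?thesis using Wsc[OF True, of n] by simp
        next
          case False then show ?thesis using Wsc[of m k n] av_diff_commute by simp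
        qed
        also have "\<dots> \<le> \<epsilon> ^ N" using mk eps0 eps1 by (intro power_decreasing) auto
        finally show "av (Ws m $ n - Ws k $ n) < e" using N by linarith
      qed
      then show "\<exists>N. \<forall>m\<ge>N. \<forall>k\<ge>N. av (Ws m $ n - Ws k $ n) < e" by blast
    qed
    then show ?thesis using compl[unfolded complete_abs_def, rule_format, of "\<lambda>k. Ws k $ n"] by blast
  qed
  then obtain L where L: "\<And>n. (\<lambda>k. av (Ws k $ n - L n)) \<longlonglongrightarrow> 0" by metis
  define W where "W = Abs_fps L"
  have WL: "av (W $ n - Ws k $ n) \<le> \<epsilon> ^ Suc k" for n k
    unfolding W_def fps_nth_Abs_fps
    by (rule lim_bound[OF L[of n], of k]) (use Wsc in auto)
  have Wb: "av (W $ n) \<le> 1" for n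
  proof -
    have "W $ n = (W $ n - Ws 0 $ n) + Ws 0 $ n" by simp
    then have "av (W $ n) \<le> max (av (W $ n - Ws 0 $ n)) (av (Ws 0 $ n))" by (metis av_add)
    then show ?thesis using WL[of n 0] Wsb[of 0 n] eps1 by (auto intro: maxle2)
  qed
  have Wfix: "W = 1 - T W"
  proof (rule fps_ext)
    fix n
    define x where "x = W $ n - (1 - T W) $ n"
    have "av x \<le> \<epsilon> ^ k" for k
    proof -
      have "x = (W $ n - Ws (Suc k) $ n) + T (W - Ws k) $ n"
        unfolding x_def WsS by (simp flip: Tdiff)
      then have "av x \<le> max (av (W $ n - Ws (Suc k) $ n)) (av (T (W - Ws k) $ n))" by (metis av_add)
      moreover have "av (T (W - Ws k) $ n) \<le> \<epsilon> * \<epsilon> ^ Suc k"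
        by (rule Tb) (use WL eps0 in auto)
      moreover have "\<epsilon> ^ Suc (Suc k) \<le> \<epsilon> ^ k" "\<epsilon> * \<epsilon> ^ Suc k \<le> \<epsilon> ^ k"
        using eps0 eps1 by (auto intro!: power_decreasing simp flip: power_Suc)
      ultimately show ?thesis using WL[of n "Suc k"] by (auto intro: maxle2)
    qed
    then have "x = 0" using small_zero eps1 by blast
    then show "W $ n = (1 - T W) $ n" unfolding x_def by simp
  qed
  have WI: "I W" using Wb by (rule I_intro)
  have W0: "av (W $ 0) = 1"
  proof -
    have "W $ 0 = - (T W $ 0) + 1" using arg_cong[OF Wfix, of "\<lambda>F. F $ 0"] by simp
    moreover have "av (- (T W $ 0)) < av 1"
      using Tb[of 1 W 0] Wb eps1 by simp
    ultimately show ?thesis using av_add_strict[of "- (T W $ 0)" 1] by simp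
  qed
  define V where "V = W * Bi"
  have VI: "I V" using WI BiI by (simp add: V_def I_mult)
  have V0: "av (V $ 0) = 1" using W0 Bi0 by (simp add: V_def)
  define Vh where "Vh = V * h"
  have "Vh = W * C + fps_X^d * (W * (Bi * B))"
    unfolding Vh_def V_def C_def hAB by (simp add: algebra_simps)
  then have Vh_eq: "Vh = W * C + W * fps_X^d" using BiB by (simp add: mult.commute)
  have shVh: "fps_shift d Vh = 1"
  proof -
    have "fps_shift d Vh = T W + W" unfolding Vh_eq T_def by (simp add: fps_shift_add)
    then show ?thesis using Wfix by (metis add.commute diff_add_cancel)
  qed
  have Vh_hi: "Vh $ n = (if n = d then 1 else 0)" if "n \<ge> d" for n
  proof -
    have "Vh $ n = fps_shift d Vh $ (n - d)" using that by simp
    then show ?thesis unfolding shVh using that by auto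
  qed
  have Vh_lo: "av (Vh $ n) < 1" if "n < d" for n
    unfolding Vh_def fps_mult_nth
  proof (rule av_sum_less)
    fix i assume "i \<in> {0..n}"
    then have "av (h $ (n - i)) < 1" using that hl by simp
    moreover have "av (V$i) * av (h $ (n - i)) \<le> 1 * av (h $ (n - i))"
      by (rule mult_right_mono) (use I_nth[OF VI, of i] in auto)
    ultimately have "av (V$i) * av (h $ (n - i)) < 1" by linarith
    then show "av (V $ i * h $ (n - i)) < 1" by simp
  qed auto
  define P where "P = Poly (map (\<lambda>i. Vh $ i) [0..<Suc d])"
  have cP: "coeff P i = Vh $ i" for i
  proof (cases "i < Suc d")
    case True then show ?thesis by (simp del: upt_Suc add: P_def nth_default_def)
  next
    case False then show ?thesis using Vh_hi[of i] by (simp del: upt_Suc add: P_def nth_default_def)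
  qed
  have fP: "fps_of_poly P = Vh" by (rule fps_ext) (simp add: cP)
  have cPd: "coeff P d = 1" using Vh_hi[of d] cP by simp
  have degP: "degree P = d"
  proof (rule antisym)
    show "degree P \<le> d" by (rule degree_le) (use Vh_hi cP in auto)
    show "d \<le> degree P" by (rule le_degree) (use cPd in auto)
  qed
  define U where "U = inverse V"
  have UI: "I U" unfolding U_def by (rule I_inverse[OF VI V0])
  have U0: "av (U $ 0) = 1" unfolding U_def using V0 by (simp add: av_inverse_1)
  have UV: "U * V = 1" unfolding U_def using V0 by (intro inverse_mult_eq_1) auto
  have "h = U * fps_of_poly P" unfolding fP Vh_def using UV by (metis mult.assoc mult_1)
  moreover have "\<forall>i. av (coeff P i) \<le> 1" using cP I_nth[OF I_mult[OF VI hI]] Vh_def by simp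
  moreover have "\<forall>i<d. av (coeff P i) < 1" using cP Vh_lo by simp
  ultimately show ?thesis using UI U0 degP cPd by blast
qed

end



lemma split_monic:
  fixes P :: "'a::field poly"
  assumes algcl: "alg_closed_field TYPE('a)" and lc: "lead_coeff P = 1"
  shows "\<exists>r. P = (\<Prod>i<degree P. [:- r i, 1:])"
  using lc
proof (induction "degree P" arbitrary: P)
  case 0
  have c: "coeff P 0 = 1" using 0 by simp
  have "P = [:coeff P 0:]" using 0(1)[symmetric] by (rule degree_eq_zeroE) simp
  then have "P = 1" using c by (simp add: one_pCons)
  then show ?case using 0(1)[symmetric] by simp
next
  case (Suc n)
  have "\<exists>x. poly P x = 0" using algcl[unfolded alg_closed_field_def, rule_format, of P] Suc.hyps(2) by simp
  then obtain x where x: "poly P x = 0" by blast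
  then obtain Q where PQ: "P = [:- x, 1:] * Q" using poly_eq_0_iff_dvd by (metis dvdE)
  have P0: "P \<noteq> 0" using Suc.prems by auto
  then have Q0: "Q \<noteq> 0" using PQ by auto
  have dQ: "degree Q = n" using PQ Suc.hyps(2) degree_mult_eq[of "[:- x, 1:]" Q] Q0 by simp
  have "lead_coeff P = lead_coeff [:- x, 1:] * lead_coeff Q" unfolding PQ by (rule lead_coeff_mult)
  then have lQ: "lead_coeff Q = 1" using Suc.prems by simp
  obtain r where r: "Q = (\<Prod>i<n. [:- r i, 1:])" using Suc.hyps(1)[of Q] dQ lQ by auto
  define r' where "r' = r(n := x)"
  have "(\<Prod>i<n. [:- r i, 1:]) = (\<Prod>i<n. [:- r' i, 1:])" by (rule prod.cong) (auto simp: r'_def)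
  then have "P = (\<Prod>i<Suc n. [:- r' i, 1:])" using PQ r by (simp add: r'_def mult.commute)
  then show ?case unfolding Suc.hyps(2)[symmetric] by blast
qed

context VF begin

lemma dist_root:
  assumes small: "\<And>i. i < d \<Longrightarrow> av (coeff P i) < 1" and cd: "coeff P d = 1" and dg: "degree P = d"
    and x: "1 \<le> av x"
  shows "poly P x \<noteq> 0"
proof -
  have "poly P x = (\<Sum>i<d. coeff P i * x^i) + x^d"
    unfolding poly_altdef dg by (simp add: cd lessThan_Suc_atMost[symmetric])
  moreover have "av (\<Sum>i<d. coeff P i * x^i) < av (x^d)"
  proof (rule av_sum_less)
    show "0 < av (x^d)" using x by (simp, intro zero_less_power) linarith
    fix i assume i: "i \<in> {..<d}"
    have "av (coeff P i) * av x ^ i \<le> av (coeff P i) * av x ^ d"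
      by (rule mult_left_mono) (use i x in \<open>auto intro: power_increasing\<close>)
    also have "\<dots> < 1 * av x ^ d"
      by (rule mult_strict_right_mono) (use i small x in \<open>auto intro!: zero_less_power\<close>)
    finally show "av (coeff P i * x^i) < av (x^d)" by simp
  qed auto
  ultimately have "av (poly P x) = av (x^d)" using av_add_strict by simp
  then show ?thesis using x by auto
qed

lemma value_unit:
  assumes "I U" "av (U$0) = 1" "av z < 1"
  shows "av (fps_value av U z) = 1"
proof -
  have e: "fps_value av U z = z * fps_value av (fps_shift 1 U) z + U$0"
    using value_decomp[OF assms(1,3)] by simp
  have b: "av (fps_value av (fps_shift 1 U) z) \<le> 1" by (rule value_bound[OF I_shift[OF assms(1)] assms(3)])
  have "av z * av (fps_value av (fps_shift 1 U) z) \<le> av z * 1" by (rule mult_left_mono[OF b]) simp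
  then have "av (z * fps_value av (fps_shift 1 U) z) \<le> av z * 1" by simp
  then have "av (z * fps_value av (fps_shift 1 U) z) < av (U$0)" using assms by simp
  then show ?thesis unfolding e using av_add_strict assms(2) by simp
qed

lemma weier_roots:
  fixes h :: "'a fps"
  assumes algcl: "alg_closed_field TYPE('a)" and hI: "I h" and wd: "wideg av h = enat d"
  shows "\<exists>r. (\<forall>i<d. av (r i) < 1) \<and> (\<forall>z. av z < 1 \<longrightarrow> (fps_value av h z = 0 \<longleftrightarrow> (\<exists>i<d. z = r i)))
             \<and> av (h$0) = (\<Prod>i<d. av (r i))"
proof -
  have ex: "\<exists>n. \<not> av (h$n) < 1" using wd unfolding wideg_def by (auto split: if_splits)
  then have dL: "d = (LEAST n. \<not> av (h$n) < 1)" using wd unfolding wideg_def by auto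
  have hd: "av (h$d) = 1" using LeastI_ex[OF ex] dL I_nth[OF hI, of d] by simp
  have hl: "av (h$i) < 1" if "i < d" for i using not_less_Least[of i "\<lambda>n. \<not> av (h$n) < 1"] that dL by auto
  obtain U P where UP: "I U" "av (U$0) = 1" "\<forall>i. av (coeff P i) \<le> 1" "\<forall>i<d. av (coeff P i) < 1"
     "degree P = d" "coeff P d = 1" "h = U * fps_of_poly P"
    using weier_prep[OF hI hd hl] by blast
  obtain r where r: "P = (\<Prod>i<d. [:- r i, 1:])"
    using split_monic[OF algcl, of P] UP(5,6) by auto
  have polyP: "poly P z = (\<Prod>i<d. z - r i)" for z unfolding r poly_prod by simp
  have rs: "av (r i) < 1" if "i < d" for i
  proof (rule ccontr)
    assume "\<not> av (r i) < 1"
    then have "poly P (r i) \<noteq> 0" using dist_root[of d P "r i"] UP by auto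
    moreover have "poly P (r i) = 0" unfolding polyP using that by auto
    ultimately show False by simp
  qed
  have hv: "fps_value av h z = fps_value av U z * poly P z" if "av z < 1" for z
    using value_mult[OF UP(1) _ that, of "fps_of_poly P"] value_poly[OF _ that, of P] UP by auto
  have roots: "fps_value av h z = 0 \<longleftrightarrow> (\<exists>i<d. z = r i)" if "av z < 1" for z
  proof -
    have "fps_value av U z \<noteq> 0" using value_unit[OF UP(1,2) that] by auto
    then show ?thesis unfolding hv[OF that] polyP by auto
  qed
  have "h$0 = fps_value av h 0" using value_at0[OF hI] by simp
  also have "\<dots> = U$0 * (\<Prod>i<d. - r i)" unfolding hv[of 0, simplified] polyP value_at0[OF UP(1)] by simp
  finally have "av (h$0) = (\<Prod>i<d. av (r i))" using UP(2) by (simp add: av_prod)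
  then show ?thesis using rs roots by blast
qed

end



section \<open>Periodicity of an arbitrary map\<close>

lemma fp_comm: "(g ^^ a) ((g ^^ b) x) = (g ^^ (a + b)) x"
  by (simp add: funpow_add)

lemma fp_swap: "(g ^^ a) ((g ^^ b) x) = (g ^^ b) ((g ^^ a) x)"
  by (simp add: fp_comm add.commute)

lemma per_mult: "(g ^^ a) z = z \<Longrightarrow> (g ^^ (a * t)) z = z"
proof (induction t)
  case (Suc t)
  have "(g ^^ (a * Suc t)) z = (g ^^ a) ((g ^^ (a * t)) z)" by (simp add: fp_comm)
  then show ?case using Suc by simp
qed simp

lemma per_sub: assumes "(g ^^ a) z = z" "(g ^^ b) z = z" "a \<le> b" shows "(g ^^ (b - a)) z = z"
proof -
  have "(g ^^ (b - a)) z = (g ^^ (b - a)) ((g ^^ a) z)" using assms by simp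
  also have "\<dots> = (g ^^ b) z" using assms(3) by (simp add: fp_comm)
  finally show ?thesis using assms by simp
qed

lemma per_gcd: assumes "(g ^^ a) z = z" "(g ^^ b) z = z" "a \<noteq> 0" shows "(g ^^ gcd a b) z = z"
proof -
  obtain x y where xy: "a * x = b * y + gcd a b" using bezout_nat[OF assms(3)] by blast
  have "(g ^^ (a * x - b * y)) z = z"
    by (rule per_sub[OF per_mult[OF assms(2), of y] per_mult[OF assms(1), of x]]) (use xy in simp)
  then show ?thesis using xy by simp
qed

lemma per_min_dvd:
  assumes "m \<ge> 1" "(g ^^ m) z = z" "\<forall>k. 1 \<le> k \<and> k < m \<longrightarrow> (g ^^ k) z \<noteq> z"
    and "(g ^^ k) z = z" "k \<ge> 1"
  shows "m dvd k"
proof -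
  have "(g ^^ gcd m k) z = z" using per_gcd[OF assms(2,4)] assms(1) by simp
  moreover have "gcd m k \<ge> 1" using assms(1) by (simp add: Suc_le_eq)
  moreover have "gcd m k \<le> m" using assms(1) by (simp add: gcd_le1_nat)
  ultimately have "gcd m k = m" using assms(3) by (meson le_neq_implies_less)
  then show ?thesis by (metis gcd_dvd2)
qed

lemma per_orbit_pt: "(g ^^ m) z = z \<Longrightarrow> (g ^^ m) ((g ^^ i) z) = (g ^^ i) z"
  by (metis fp_swap)

lemma per_back:
  assumes "(g ^^ m) z = z" "m \<ge> 1" "(g ^^ k) ((g ^^ i) z) = (g ^^ i) z"
  shows "(g ^^ k) z = z"
proof -
  have zz: "z = (g ^^ (m * i - i)) ((g ^^ i) z)"
  proof -
    have "m * i \<ge> i" using assms(2) by simp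
    then have "(g ^^ (m * i - i)) ((g ^^ i) z) = (g ^^ (m * i)) z" by (simp add: fp_comm)
    then show ?thesis using per_mult[OF assms(1)] by simp
  qed
  have "(g ^^ k) z = (g ^^ k) ((g ^^ (m * i - i)) ((g ^^ i) z))" using zz by simp
  also have "\<dots> = (g ^^ (m * i - i)) ((g ^^ k) ((g ^^ i) z))" by (rule fp_swap)
  also have "\<dots> = z" using assms(3) zz by simp
  finally show ?thesis .
qed

lemma orbit_set:
  assumes "(g ^^ m) z = z" "m \<ge> 1"
  shows "{(g ^^ k) z | k. True} = (\<lambda>i. (g ^^ i) z) ` {..<m}"
proof (rule set_eqI, rule iffI)
  fix y assume "y \<in> {(g ^^ k) z | k. True}"
  then obtain k where k: "y = (g ^^ k) z" by blast
  have "(g ^^ k) z = (g ^^ (k mod m)) ((g ^^ (m * (k div m))) z)"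
    by (simp add: fp_comm)
  also have "\<dots> = (g ^^ (k mod m)) z" using per_mult[OF assms(1)] by simp
  finally show "y \<in> (\<lambda>i. (g ^^ i) z) ` {..<m}" using k assms(2) by auto
qed auto

lemma orbit_inj:
  assumes "m \<ge> 1" "(g ^^ m) z = z" "\<forall>k. 1 \<le> k \<and> k < m \<longrightarrow> (g ^^ k) z \<noteq> z"
  shows "inj_on (\<lambda>i. (g ^^ i) z) {..<m}"
proof (rule linorder_inj_onI')
  fix i j assume ij: "i \<in> {..<m}" "j \<in> {..<m}" "i < j"
  show "(g ^^ i) z \<noteq> (g ^^ j) z"
  proof
    assume e: "(g ^^ i) z = (g ^^ j) z"
    have "(g ^^ (j - i)) z = (g ^^ (j - i)) ((g ^^ m) z)" using assms by simp
    also have "\<dots> = (g ^^ (m - i)) ((g ^^ j) z)" using ij by (simp add: fp_comm add.commute)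
    also have "\<dots> = (g ^^ (m - i)) ((g ^^ i) z)" using e by simp
    also have "\<dots> = z" using ij assms by (simp add: fp_comm)
    finally have zz: "(g ^^ (j - i)) z = z" .
    have "1 \<le> j - i" "j - i < m" using ij by auto
    then show False using assms(3) zz by blast
  qed
qed

lemma orbit_card:
  assumes "m \<ge> 1" "(g ^^ m) z = z" "\<forall>k. 1 \<le> k \<and> k < m \<longrightarrow> (g ^^ k) z \<noteq> z"
  shows "card ((\<lambda>i. (g ^^ i) z) ` {..<m}) = m"
  using card_image[OF orbit_inj[OF assms]] by simp

section \<open>Iterates of power series\<close>

lemma iter_0[simp]: "fps_iter f 0 = fps_X" by (simp add: fps_iter_def)
lemma iter_Suc: "fps_iter f (Suc n) = f oo fps_iter f n" by (simp add: fps_iter_def)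
lemma iter_nth0: "f $ 0 = 0 \<Longrightarrow> fps_iter f n $ 0 = 0"
  by (induction n) (simp_all add: iter_Suc)
lemma compose_nth1: "(F oo G) $ Suc 0 = F $ Suc 0 * (G::'a::field fps) $ Suc 0"
  by (simp add: fps_compose_nth)
lemma iter_nth1: "(f :: 'a::field fps) $ 0 = 0 \<Longrightarrow> fps_iter f n $ Suc 0 = (f $ Suc 0) ^ n"
  by (induction n) (simp_all add: iter_Suc compose_nth1)
lemma iter_add: "(f :: 'a::field fps) $ 0 = 0 \<Longrightarrow> fps_iter f (m + k) = fps_iter f m oo fps_iter f k"
proof (induction m)
  case 0 then show ?case by (simp add: iter_nth0)
next
  case (Suc m)
  then show ?case by (simp add: iter_Suc fps_compose_assoc iter_nth0)
qed

context VF begin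

lemma iter_I: "I f \<Longrightarrow> I (fps_iter f n)"
  by (induction n) (simp_all add: iter_Suc I_compose)

lemma iter_value:
  assumes "I f" "f $ 0 = 0" "av z < 1"
  shows "fps_value av (fps_iter f n) z = (fps_value av f ^^ n) z"
proof (induction n)
  case 0 then show ?case using assms by simp
next
  case (Suc n)
  have "fps_value av (fps_iter f (Suc n)) z = fps_value av f (fps_value av (fps_iter f n) z)"
    unfolding iter_Suc by (rule value_compose) (use assms iter_I iter_nth0 in auto)
  then show ?case using Suc by simp
qed

lemma iter_small:
  assumes "I f" "f $ 0 = 0" "av z < 1"
  shows "av ((fps_value av f ^^ n) z) \<le> av z"
  using value_small[OF iter_I[OF assms(1)] assms(3) iter_nth0[OF assms(2)], of n]
    iter_value[OF assms] by simp

lemma value_shift1: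
  assumes "I G" "G $ 0 = 0" "av w < 1"
  shows "fps_value av G w = w * (G$1 + w * fps_value av (fps_shift 1 (fps_shift 1 G)) w)"
  using value_decomp[OF assms(1,3)] value_decomp[OF I_shift[OF assms(1)] assms(3)] assms(2) by simp

lemma abs_pres:
  assumes "I G" "G $ 0 = 0" "av (G$1) = 1" "av w < 1"
  shows "av (fps_value av G w) = av w"
proof -
  have "av (fps_value av (fps_shift 1 G) w) = 1"
    by (rule value_unit) (use assms I_shift in auto)
  then show ?thesis using value_decomp[OF assms(1,4)] assms(2) by simp
qed

lemma fix_free:
  assumes "I G" "G $ 0 = 0" "av (G$1 - 1) = 1" "av w < 1" "w \<noteq> 0"
  shows "fps_value av G w \<noteq> w"
proof
  assume e: "fps_value av G w = w"
  define s where "s = fps_value av (fps_shift 1 (fps_shift 1 G)) w"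
  have sb: "av s \<le> 1" unfolding s_def by (rule value_bound) (use assms I_shift in auto)
  have "w * (G$1 + w * s) = w * 1" using e value_shift1[OF assms(1,2,4)] unfolding s_def by simp
  then have "G$1 + w * s = 1" using assms(5) by simp
  then have "(G$1 - 1) + w * s = 0" by (simp add: algebra_simps)
  moreover have "av (w * s) < av (G$1 - 1)"
  proof -
    have "av w * av s \<le> av w * 1" by (rule mult_left_mono[OF sb]) simp
    then show ?thesis using assms(3,4) by simp
  qed
  ultimately show False using av_add_strict[of "w * s" "G$1 - 1"] assms(3) by (simp add: add.commute)
qed

end



lemma pow_prod_zero:
  fixes A B :: "'a::field fps"
  assumes "A $ 0 = 0" "B $ 0 = 0" "n < a + b"
  shows "(B ^ b * A ^ a) $ n = 0"
  unfolding fps_mult_nth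
proof (rule sum.neutral, intro ballI)
  fix i assume i: "i \<in> {0..n}"
  show "(B ^ b) $ i * (A ^ a) $ (n - i) = 0"
  proof (cases "i < b")
    case True then show ?thesis using startsby_zero_power_prefix[OF assms(2)] by simp
  next
    case False
    then have "n - i < a" using assms(3) i by auto
    then show ?thesis using startsby_zero_power_prefix[OF assms(1)] by simp
  qed
qed

lemma wideg_eq: "wideg av h = enat d \<longleftrightarrow> (\<not> av (h$d) < 1 \<and> (\<forall>i<d. av (h$i) < 1))"
proof
  assume wd: "wideg av h = enat d"
  have ex: "\<exists>n. \<not> av (h$n) < 1"
  proof (rule ccontr)
    assume "\<not> (\<exists>n. \<not> av (h$n) < 1)"
    then have "wideg av h = \<infinity>" unfolding wideg_def by simp
    then show False using wd by simp
  qed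
  then have "wideg av h = enat (LEAST n. \<not> av (h$n) < 1)" unfolding wideg_def by simp
  then have dL: "d = (LEAST n. \<not> av (h$n) < 1)" using wd by simp
  have "\<not> av (h$d) < 1" unfolding dL by (rule LeastI_ex[OF ex])
  moreover have "av (h$i) < 1" if "i < d" for i
    using not_less_Least[of i "\<lambda>n. \<not> av (h$n) < 1"] that unfolding dL by blast
  ultimately show "\<not> av (h$d) < 1 \<and> (\<forall>i<d. av (h$i) < 1)" by blast
next
  assume h: "\<not> av (h$d) < 1 \<and> (\<forall>i<d. av (h$i) < 1)"
  have L: "(LEAST n. \<not> av (h$n) < 1) = d"
  proof (rule Least_equality)
    show "\<not> av (h$d) < 1" using h by blast
    fix y assume "\<not> av (h$y) < 1" then show "d \<le> y" using h leI by blast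
  qed
  have ex: "\<exists>n. \<not> av (h$n) < 1" using h by blast
  show "wideg av h = enat d" unfolding wideg_def using ex L by simp
qed

lemma pow_powr: assumes "0 \<le> (x::real)" "n > 0" shows "(x ^ n) powr (1 / real n) = x"
proof (cases "x = 0")
  case True then show ?thesis using assms by simp
next
  case False
  then have "x > 0" using assms by simp
  then have "(x ^ n) powr (1 / real n) = (x powr real n) powr (1 / real n)" by (simp add: powr_realpow)
  also have "\<dots> = x" using assms \<open>x > 0\<close> by (simp add: powr_powr)
  finally show ?thesis .
qed

context VF begin

lemma compose_diff_factor:
  fixes F A B :: "'a fps"
  assumes FI: "I F" and AI: "I A" and BI: "I B" and A0: "A$0 = 0" and B0: "B$0 = 0"
  shows "\<exists>D. I D \<and> (F oo A) - (F oo B) = (A - B) * D"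
proof -
  define S where "S k = (\<Sum>i<Suc k. B ^ (k - i) * A ^ i)" for k
  define Dm where "Dm M = (\<Sum>k<M. fps_const (F $ Suc k) * S k)" for M
  have SI: "I (S k)" for k unfolding S_def by (rule I_sum) (auto intro!: I_mult I_power AI BI)
  have DmI: "I (Dm M)" for M unfolding Dm_def by (auto intro!: I_sum I_mult I_const SI I_nth[OF FI])
  have S0: "S k $ n = 0" if "n < k" for k n
    unfolding S_def fps_sum_nth by (rule sum.neutral) (use that pow_prod_zero[OF A0 B0] in auto)
  have ABS: "A ^ Suc k - B ^ Suc k = (A - B) * S k" for k
    unfolding S_def using power_diff_sumr2[of A "Suc k" B] by simp
  have stab: "Dm M $ n = Dm (Suc n) $ n" if "Suc n \<le> M" for M n
  proof -
    have "Dm M = Dm (Suc n) + (\<Sum>k\<in>{Suc n..<M}. fps_const (F $ Suc k) * S k)"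
      unfolding Dm_def
      using sum.atLeastLessThan_concat[of 0 "Suc n" M "\<lambda>k. fps_const (F $ Suc k) * S k"] that
      by (simp add: lessThan_atLeast0)
    moreover have "(\<Sum>k\<in>{Suc n..<M}. fps_const (F $ Suc k) * S k) $ n = 0"
      unfolding fps_sum_nth by (rule sum.neutral) (auto simp: S0)
    ultimately show ?thesis by simp
  qed
  define D where "D = Abs_fps (\<lambda>n. Dm (Suc n) $ n)"
  have DI: "I D" unfolding D_def by (rule I_intro) (simp add: I_nth[OF DmI])
  have "((A - B) * D) $ n = ((F oo A) - (F oo B)) $ n" for n
  proof -
    have "((A - B) * D) $ n = (\<Sum>i=0..n. (A - B) $ i * Dm (Suc n) $ (n - i))"
      unfolding fps_mult_nth D_def fps_nth_Abs_fps
    proof (rule sum.cong)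
      fix i assume "i \<in> {0..n}"
      then show "(A - B) $ i * Dm (Suc (n - i)) $ (n - i) = (A - B) $ i * Dm (Suc n) $ (n - i)"
        using stab[of "n - i" "Suc n"] by simp
    qed simp
    also have "\<dots> = ((A - B) * Dm (Suc n)) $ n" by (simp add: fps_mult_nth)
    also have "(A - B) * Dm (Suc n) = (\<Sum>k<Suc n. fps_const (F $ Suc k) * (A ^ Suc k - B ^ Suc k))"
      unfolding Dm_def ABS by (simp add: sum_distrib_left algebra_simps)
    finally have l: "((A - B) * D) $ n = (\<Sum>k\<le>n. F $ Suc k * ((A ^ Suc k) $ n - (B ^ Suc k) $ n))"
      by (simp only: fps_sum_nth fps_mult_left_const_nth fps_sub_nth lessThan_Suc_atMost)
    define g where "g i = F $ i * ((A ^ i) $ n - (B ^ i) $ n)" for i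
    have g0: "g 0 = 0" by (simp add: g_def)
    have gS: "g (Suc n) = 0" unfolding g_def
      using startsby_zero_power_prefix[OF A0, of "Suc n"] startsby_zero_power_prefix[OF B0, of "Suc n"] by simp
    have "((F oo A) - (F oo B)) $ n = (\<Sum>i\<le>n. g i)"
      unfolding g_def by (simp add: fps_compose_nth atLeast0AtMost sum_subtractf algebra_simps)
    also have "\<dots> = (\<Sum>i\<le>Suc n. g i)" using gS by simp
    also have "\<dots> = (\<Sum>i\<le>n. g (Suc i))" using g0 by (simp only: sum.atMost_Suc_shift) simp
    finally show ?thesis using l unfolding g_def by simp
  qed
  then have "(F oo A) - (F oo B) = (A - B) * D" by (intro fps_ext) simp
  then show ?thesis using DI by blast
qed

lemma iter_div:
  fixes f :: "'a fps"
  assumes fI: "I f" and f0: "f $ 0 = 0"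
  shows "\<exists>C. I C \<and> fps_iter f (a * t) - fps_X = (fps_iter f a - fps_X) * C"
proof (induction t)
  case 0 then show ?case by (intro exI[of _ 0]) simp
next
  case (Suc t)
  then obtain C where C: "I C" "fps_iter f (a * t) - fps_X = (fps_iter f a - fps_X) * C" by blast
  define F where "F = fps_iter f a"
  define Y where "Y = fps_iter f (a * t)"
  have FI: "I F" and YI: "I Y" unfolding F_def Y_def by (simp_all add: iter_I fI)
  have Y0: "Y $ 0 = 0" unfolding Y_def by (simp add: iter_nth0 f0)
  obtain D where D: "I D" "(F oo Y) - (F oo fps_X) = (Y - fps_X) * D"
    using compose_diff_factor[OF FI YI I_X Y0] by auto
  have "fps_iter f (a * Suc t) = F oo Y" unfolding F_def Y_def
    by (simp add: iter_add[OF f0, symmetric])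
  then have "fps_iter f (a * Suc t) - fps_X = ((F oo Y) - (F oo fps_X)) + (F - fps_X)" by simp
  also have "\<dots> = (F - fps_X) * (C * D + 1)" using D(2) C(2) unfolding F_def Y_def
    by (simp add: algebra_simps)
  finally show ?case unfolding F_def using C(1) D(1) by (intro exI[of _ "C * D + 1"]) (simp add: I_add I_mult)
qed

end



theorem proposition5p1:
  fixes av :: "'a::field \<Rightarrow> real"
    and p q :: nat and lam :: 'a and f :: "'a fps"
  assumes ultra: "ultrametric_abs av"
    and compl: "complete_abs av"
    and algcl: "alg_closed_field TYPE('a)"
    and p_prime: "prime p"
    and res_char: "av (of_nat p) < 1"
    and q_pos: "q \<ge> 1" and q_coprime: "\<not> p dvd q"
    and lam_unit: "av lam = 1"
    and lam_order: "av (lam ^ q - 1) < 1"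
    and lam_order_min: "\<forall>k. 1 \<le> k \<and> k < q \<longrightarrow> \<not> av (lam ^ k - 1) < 1"
    and f_int: "integral_fps av f"
    and f0: "fps_nth f 0 = 0" and f1: "fps_nth f 1 = lam"
  shows
    "(wideg av (fps_iter f q - fps_X) = enat (q + 1) \<and> lam ^ q \<noteq> 1 \<longrightarrow>
       (\<exists>z0. z0 \<noteq> 0 \<and> minimal_period av f q z0 \<and>
          (\<forall>w. w \<noteq> 0 \<and> minimal_period av f q w \<longrightarrow> w \<in> orbit av f z0)) \<and>
       (\<forall>w0. w0 \<noteq> 0 \<and> minimal_period av f q w0 \<longrightarrow>
          av w0 = av (lam ^ q - 1) powr (1 / real q)))
     \<and>
     (\<forall>n::nat. n \<ge> 1 \<longrightarrow>
        wideg av ((fps_iter f (q * p ^ n) - fps_X) div (fps_iter f (q * p ^ (n - 1)) - fps_X))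
          = enat (q * p ^ n) \<longrightarrow>
        (\<forall>z0. periodic_pt av f (q * p ^ (n - 1)) z0 \<longrightarrow>
           fps_value av (fps_deriv (fps_iter f (q * p ^ n))) z0 \<noteq> 1) \<longrightarrow>
        (\<exists>z0. minimal_period av f (q * p ^ n) z0 \<and>
           (\<forall>w. minimal_period av f (q * p ^ n) w \<longrightarrow> w \<in> orbit av f z0)) \<and>
        (\<forall>z0. minimal_period av f (q * p ^ n) z0 \<longrightarrow>
           av z0 = av ((lam ^ (q * p ^ n) - 1) / (lam ^ (q * p ^ (n - 1)) - 1))
                     powr (1 / real (q * p ^ n))))"
proof -
  interpret VF av using ultra compl by unfold_locales
  define \<phi> where "\<phi> = fps_value av f"
  have f1': "f $ Suc 0 = lam" using f1 by simp
  have lampow: "av (lam ^ m) = 1" for m using lam_unit by simp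
  have lam_le: "av (lam ^ m - 1) \<le> 1" for m
    using av_diff[of "lam ^ m" 1] lampow[of m] by simp
  have ordq: "av (lam ^ (q * t) - 1) < 1" for t
  proof (induction t)
    case 0 then show ?case by simp
  next
    case (Suc t)
    have e: "lam ^ (q * Suc t) - 1 = lam ^ (q * t) * (lam ^ q - 1) + (lam ^ (q * t) - 1)"
      by (simp add: algebra_simps power_add)
    have "av (lam ^ (q * t) * (lam ^ q - 1)) < 1" using lam_order lampow by simp
    then show ?case unfolding e by (rule maxle3[OF av_add]) (rule Suc)
  qed
  have ordn: "av (lam ^ m - 1) = 1" if "\<not> q dvd m" for m
  proof (rule ccontr)
    assume "av (lam ^ m - 1) \<noteq> 1"
    then have lt: "av (lam ^ m - 1) < 1" using lam_le[of m] by simp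
    define r where "r = m mod q"
    define t where "t = m div q"
    have m: "m = q * t + r" unfolding r_def t_def by simp
    have r1: "1 \<le> r" "r < q" using that q_pos unfolding r_def
      by (auto simp: Suc_le_eq mod_greater_zero_iff_not_dvd)
    have e: "lam ^ r - 1 = (lam ^ m - 1) - lam ^ r * (lam ^ (q * t) - 1)"
      unfolding m by (simp add: algebra_simps power_add)
    have "av (lam ^ r * (lam ^ (q * t) - 1)) < 1" using ordq lampow by simp
    then have "av (lam ^ r - 1) < 1" unfolding e by (rule maxle3[OF av_diff lt])
    then show False using lam_order_min r1 by blast
  qed
  have itI: "integral_fps av (fps_iter f m)" for m by (rule iter_I[OF f_int])
  have it0: "fps_iter f m $ 0 = 0" for m by (rule iter_nth0[OF f0])
  have it1: "fps_iter f m $ Suc 0 = lam ^ m" for m using iter_nth1[OF f0] f1' by simp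
  have itv: "fps_value av (fps_iter f m) z = (\<phi> ^^ m) z" if "av z < 1" for m z
    unfolding \<phi>_def by (rule iter_value[OF f_int f0 that])
  have itX: "fps_value av (fps_iter f m - fps_X) z = (\<phi> ^^ m) z - z" if "av z < 1" for m z
    using value_diff[OF itI I_X that] itv[OF that] that by simp
  have pres: "av ((\<phi> ^^ m) z) = av z" if "av z < 1" for m z
    using abs_pres[OF itI it0, of m z] it1 lampow that itv by simp
  have nofix: "(\<phi> ^^ m) w \<noteq> w" if "\<not> q dvd m" "av w < 1" "w \<noteq> 0" for m w
    using fix_free[OF itI it0, of m w] it1 ordn[OF that(1)] that itv by simp
  have phi0: "(\<phi> ^^ m) 0 = 0" for m using itv[of 0 m] value_at0[OF itI] it0 by simp
  have pp: "periodic_pt av f m z \<longleftrightarrow> av z < 1 \<and> (\<phi> ^^ m) z = z" for m z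
    unfolding periodic_pt_def max_ideal_def \<phi>_def by simp
  have mp: "minimal_period av f m z \<longleftrightarrow> m \<ge> 1 \<and> av z < 1 \<and> (\<phi> ^^ m) z = z \<and>
      (\<forall>k. 1 \<le> k \<and> k < m \<longrightarrow> (\<phi> ^^ k) z \<noteq> z)" for m z
    unfolding minimal_period_def pp by auto
  have orb: "orbit av f z = {(\<phi> ^^ k) z | k. True}" for z
    unfolding orbit_def \<phi>_def by simp
  have pos1: "0 < (1::nat)" by simp
  show ?thesis
  proof (intro conjI impI allI)
    assume hyp1: "wideg av (fps_iter f q - fps_X) = enat (q + 1) \<and> lam ^ q \<noteq> 1"
    define H where "H = fps_iter f q - fps_X"
    define H' where "H' = fps_shift 1 H"
    have HI: "integral_fps av H" unfolding H_def by (rule I_diff[OF itI I_X])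
    have H'I: "integral_fps av H'" unfolding H'_def by (rule I_shift[OF HI])
    have H0: "H $ 0 = 0" unfolding H_def using it0 by simp
    have H'0: "H' $ 0 = lam ^ q - 1" unfolding H'_def H_def using it1 by simp
    have wH: "\<not> av (H $ (q+1)) < 1 \<and> (\<forall>i<q+1. av (H $ i) < 1)"
      using hyp1 wideg_eq[of av H "q+1"] unfolding H_def by simp
    have wH': "wideg av H' = enat q" unfolding wideg_eq H'_def using wH by auto
    obtain r where r: "\<forall>i<q. av (r i) < 1" "\<forall>z. av z < 1 \<longrightarrow> (fps_value av H' z = 0 \<longleftrightarrow> (\<exists>i<q. z = r i))"
        "av (H' $ 0) = (\<Prod>i<q. av (r i))"
      using weier_roots[OF algcl H'I wH'] by blast
    have Hdec: "fps_value av H z = z * fps_value av H' z" if "av z < 1" for z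
      using value_decomp[OF HI that] H0 unfolding H'_def by simp
    have Hroot: "(\<phi> ^^ q) z = z \<longleftrightarrow> (z = 0 \<or> (\<exists>i<q. z = r i))" if "av z < 1" for z
    proof -
      have "(\<phi> ^^ q) z = z \<longleftrightarrow> fps_value av H z = 0" using itX[OF that, of q] unfolding H_def by simp
      also have "\<dots> \<longleftrightarrow> z = 0 \<or> fps_value av H' z = 0" using Hdec[OF that] by simp
      finally show ?thesis using r(2) that by blast
    qed
    have lq0: "lam ^ q - 1 \<noteq> 0" using hyp1 by simp
    define z0 where "z0 = r 0"
    have z0s: "av z0 < 1" using r(1) q_pos unfolding z0_def by simp
    have "\<exists>i<q. z0 = r i" using q_pos unfolding z0_def by (intro exI[of _ 0]) auto
    then have z0v: "fps_value av H' z0 = 0" using r(2) z0s by blast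
    have z0nz: "z0 \<noteq> 0"
    proof
      assume "z0 = 0"
      then have "fps_value av H' 0 = 0" using z0v by simp
      then show False using value_at0[OF H'I] H'0 lq0 by simp
    qed
    have z0p: "(\<phi> ^^ q) z0 = z0" using Hroot[OF z0s] \<open>\<exists>i<q. z0 = r i\<close> by blast
    have z0min: "\<forall>k. 1 \<le> k \<and> k < q \<longrightarrow> (\<phi> ^^ k) z0 \<noteq> z0"
    proof (intro allI impI)
      fix k assume k: "1 \<le> k \<and> k < q"
      then have "\<not> q dvd k" by (auto dest: dvd_imp_le)
      then show "(\<phi> ^^ k) z0 \<noteq> z0" using nofix z0s z0nz by blast
    qed
    define Orb where "Orb = (\<lambda>i. (\<phi> ^^ i) z0) ` {..<q}"
    have cOrb: "card Orb = q" unfolding Orb_def by (rule orbit_card[OF q_pos z0p z0min])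
    have ORb: "Orb \<subseteq> r ` {..<q}"
    proof
      fix y assume "y \<in> Orb"
      then obtain i where y: "y = (\<phi> ^^ i) z0" unfolding Orb_def by blast
      have ys: "av y < 1" and ynz: "y \<noteq> 0" using pres[OF z0s, of i] z0s z0nz y by auto
      have "(\<phi> ^^ q) y = y" using per_orbit_pt[OF z0p] y by simp
      then show "y \<in> r ` {..<q}" using Hroot[OF ys] ynz by auto
    qed
    have ORbe: "Orb = r ` {..<q}"
    proof (rule card_subset_eq)
      show "card Orb = card (r ` {..<q})" using cOrb card_image_le[of "{..<q}" r] card_mono[OF _ ORb] by simp
    qed (use ORb in auto)
    have orbit0: "orbit av f z0 = Orb" unfolding orb Orb_def by (rule orbit_set[OF z0p q_pos])
    have allOrb: "w \<in> Orb" if "w \<noteq> 0" "minimal_period av f q w" for w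
    proof -
      have ws: "av w < 1" "(\<phi> ^^ q) w = w" using that(2) unfolding mp by auto
      then show ?thesis using Hroot[OF ws(1)] that(1) ORbe by auto
    qed
    have absOrb: "av y = av z0" if "y \<in> Orb" for y using that pres[OF z0s] unfolding Orb_def by auto
    have prodr: "(\<Prod>i<q. av (r i)) = av z0 ^ q"
    proof -
      have "(\<Prod>i<q. av (r i)) = (\<Prod>i<q. av z0)"
        by (rule prod.cong) (use ORbe absOrb in auto)
      then show ?thesis by simp
    qed
    show "\<exists>z0. z0 \<noteq> 0 \<and> minimal_period av f q z0 \<and>
          (\<forall>w. w \<noteq> 0 \<and> minimal_period av f q w \<longrightarrow> w \<in> orbit av f z0)"
      using z0nz z0s z0p z0min q_pos allOrb orbit0 unfolding mp by blast
    show "av w0 = av (lam ^ q - 1) powr (1 / real q)" if "w0 \<noteq> 0 \<and> minimal_period av f q w0" for w0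
    proof -
      have "av w0 = av z0" using allOrb that absOrb by blast
      moreover have "av (lam ^ q - 1) = av z0 ^ q" using r(3) H'0 prodr by simp
      ultimately show ?thesis using pow_powr[of "av z0" q] q_pos by simp
    qed
  next
    fix n :: nat
    assume n1: "n \<ge> 1"
      and wd: "wideg av ((fps_iter f (q * p ^ n) - fps_X) div (fps_iter f (q * p ^ (n - 1)) - fps_X)) = enat (q * p ^ n)"
      and der: "\<forall>z0. periodic_pt av f (q * p ^ (n - 1)) z0 \<longrightarrow>
           fps_value av (fps_deriv (fps_iter f (q * p ^ n))) z0 \<noteq> 1"
    define a where "a = q * p ^ (n - 1)"
    define b where "b = q * p ^ n"
    have p2: "p \<ge> 2" using p_prime by (simp add: prime_ge_2_nat)
    have ba: "b = a * p" unfolding a_def b_def using n1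
      by (metis mult.assoc power_minus_mult less_le_trans zero_less_one not_less mult.commute)
    have a1: "a \<ge> 1" unfolding a_def using q_pos p2 by simp
    have ab: "a < b" using ba a1 p2 by simp
    have b1: "b \<ge> 1" using a1 ab by simp
    define g where "g = fps_iter f a - fps_X"
    define N where "N = fps_iter f b - fps_X"
    have gI: "integral_fps av g" unfolding g_def by (rule I_diff[OF itI I_X])
    have NI: "integral_fps av N" unfolding N_def by (rule I_diff[OF itI I_X])
    have "periodic_pt av f a 0" using pp phi0 by simp
    then have "fps_value av (fps_deriv (fps_iter f b)) 0 \<noteq> 1" using der unfolding a_def b_def by blast
    then have lb: "lam ^ b \<noteq> 1" using value_at0[OF I_deriv[OF itI]] it1 by simp
    have la: "lam ^ a \<noteq> 1" using lb unfolding ba by (metis power_mult power_one)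
    have g1: "g $ Suc 0 = lam ^ a - 1" unfolding g_def using it1 by simp
    have g0: "g $ 0 = 0" unfolding g_def using it0 by simp
    have gnz: "g \<noteq> 0" using g1 la by auto
    obtain C where CI: "integral_fps av C" and NC: "N = g * C"
      using iter_div[OF f_int f0, of a p] unfolding N_def g_def ba by blast
    have hC: "N div g = C" unfolding NC using gnz by simp
    have wC: "wideg av C = enat b" using wd hC unfolding N_def g_def a_def b_def by simp
    obtain r where r: "\<forall>i<b. av (r i) < 1" "\<forall>z. av z < 1 \<longrightarrow> (fps_value av C z = 0 \<longleftrightarrow> (\<exists>i<b. z = r i))"
        "av (C $ 0) = (\<Prod>i<b. av (r i))"
      using weier_roots[OF algcl CI wC] by blast
    have C0: "C $ 0 = (lam ^ b - 1) / (lam ^ a - 1)"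
    proof -
      have "N $ Suc 0 = g $ 0 * C $ Suc 0 + g $ Suc 0 * C $ 0" unfolding NC by simp
      then have "lam ^ b - 1 = (lam ^ a - 1) * C $ 0" using g0 g1 it1 unfolding N_def by simp
      then show ?thesis using la by (simp add: field_simps)
    qed
    have C0nz: "C $ 0 \<noteq> 0" using C0 la lb by simp
    have Nv: "fps_value av N z = fps_value av g z * fps_value av C z" if "av z < 1" for z
      unfolding NC by (rule value_mult[OF gI CI that])
    have gv: "fps_value av g z = (\<phi> ^^ a) z - z" if "av z < 1" for z unfolding g_def by (rule itX[OF that])
    have Nv': "fps_value av N z = (\<phi> ^^ b) z - z" if "av z < 1" for z unfolding N_def by (rule itX[OF that])
    have claimA: "fps_value av C w \<noteq> 0" if ws: "av w < 1" and wa: "(\<phi> ^^ a) w = w" for w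
    proof
      assume Cw: "fps_value av C w = 0"
      have gw: "fps_value av g w = 0" using gv[OF ws] wa by simp
      have "fps_deriv N = fps_deriv g * C + g * fps_deriv C" unfolding NC by simp
      then have "fps_value av (fps_deriv N) w = 0"
        using ws Cw gw gI CI
        by (simp add: value_add value_mult I_deriv I_mult)
      moreover have "fps_deriv N = fps_deriv (fps_iter f b) - 1" unfolding N_def by simp
      ultimately have "fps_value av (fps_deriv (fps_iter f b)) w = 1"
        using value_diff[OF I_deriv[OF itI] I_1 ws, of b] ws by simp
      moreover have "periodic_pt av f a w" using pp ws wa by simp
      ultimately show False using der unfolding a_def b_def by blast
    qed
    have Croot: "fps_value av C z = 0 \<longleftrightarrow> (\<exists>i<b. z = r i)" if "av z < 1" for z using r(2) that by blast
    define z0 where "z0 = r 0"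
    have z0s: "av z0 < 1" using r(1) b1 unfolding z0_def by simp
    have "\<exists>i<b. z0 = r i" using b1 unfolding z0_def by (intro exI[of _ 0]) auto
    then have z0v: "fps_value av C z0 = 0" using Croot[OF z0s] by blast
    have z0nz: "z0 \<noteq> 0" using z0v value_at0[OF CI] C0nz by auto
    have z0p: "(\<phi> ^^ b) z0 = z0" using Nv[OF z0s] Nv'[OF z0s] z0v by simp
    have z0min: "\<forall>k. 1 \<le> k \<and> k < b \<longrightarrow> (\<phi> ^^ k) z0 \<noteq> z0"
    proof (intro allI impI notI)
      fix k assume k: "1 \<le> k \<and> k < b" and kp: "(\<phi> ^^ k) z0 = z0"
      define m where "m = gcd k b"
      have mp': "(\<phi> ^^ m) z0 = z0" unfolding m_def by (rule per_gcd[OF kp z0p]) (use k in auto)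
      have m1: "m \<ge> 1" unfolding m_def using k by (simp add: Suc_le_eq)
      have mk: "m \<le> k" unfolding m_def using k by (simp add: gcd_le1_nat)
      have mdb: "m dvd b" unfolding m_def by simp
      show False
      proof (cases "q dvd m")
        case False then show False using nofix z0s z0nz mp' by blast
      next
        case True
        then obtain e where e: "m = q * e" by blast
        have "q * e dvd q * p ^ n" using mdb e unfolding b_def by simp
        then have "e dvd p ^ n" using q_pos by simp
        then obtain i where i: "i \<le> n" "e = p ^ i" using divides_primepow_nat[OF p_prime] by blast
        have "i \<noteq> n" using i e mk k unfolding b_def by auto
        then have "i \<le> n - 1" using i by simp
        then have "e dvd p ^ (n - 1)" using i by (simp add: le_imp_power_dvd)
        then have "m dvd a" unfolding a_def e by simp
        then obtain t where t: "a = m * t" by blast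
        have "(\<phi> ^^ a) z0 = z0" unfolding t by (rule per_mult[OF mp'])
        then show False using claimA[OF z0s] z0v by simp
      qed
    qed
    define Orb where "Orb = (\<lambda>i. (\<phi> ^^ i) z0) ` {..<b}"
    have cOrb: "card Orb = b" unfolding Orb_def by (rule orbit_card[OF b1 z0p z0min])
    have rootOrb: "\<exists>i<b. y = r i" if ys: "av y < 1" and yb: "(\<phi> ^^ b) y = y" and ya: "(\<phi> ^^ a) y \<noteq> y" for y
    proof -
      have "fps_value av g y \<noteq> 0" using gv[OF ys] ya by simp
      moreover have "fps_value av N y = 0" using Nv'[OF ys] yb by simp
      ultimately have "fps_value av C y = 0" using Nv[OF ys] by simp
      then show ?thesis using Croot[OF ys] by blast
    qed
    have ORb: "Orb \<subseteq> r ` {..<b}"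
    proof
      fix y assume "y \<in> Orb"
      then obtain i where y: "y = (\<phi> ^^ i) z0" unfolding Orb_def by blast
      have ys: "av y < 1" using pres[OF z0s, of i] z0s y by auto
      have yb: "(\<phi> ^^ b) y = y" using per_orbit_pt[OF z0p] y by simp
      have ya: "(\<phi> ^^ a) y \<noteq> y"
      proof
        assume "(\<phi> ^^ a) y = y"
        then have "(\<phi> ^^ a) z0 = z0" using per_back[OF z0p b1, of a i] y by simp
        then show False using z0min[rule_format, of a] a1 ab by blast
      qed
      show "y \<in> r ` {..<b}" using rootOrb[OF ys yb ya] by auto
    qed
    have ORbe: "Orb = r ` {..<b}"
    proof (rule card_subset_eq)
      show "card Orb = card (r ` {..<b})" using cOrb card_image_le[of "{..<b}" r] card_mono[OF _ ORb] by simp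
    qed (use ORb in auto)
    have orbit0: "orbit av f z0 = Orb" unfolding orb Orb_def by (rule orbit_set[OF z0p b1])
    have allOrb: "w \<in> Orb" if "minimal_period av f b w" for w
    proof -
      have ws: "av w < 1" "(\<phi> ^^ b) w = w" "(\<phi> ^^ a) w \<noteq> w" using that a1 ab unfolding mp by auto
      then show ?thesis using rootOrb[OF ws] ORbe by auto
    qed
    have absOrb: "av y = av z0" if "y \<in> Orb" for y using that pres[OF z0s] unfolding Orb_def by auto
    have prodr: "(\<Prod>i<b. av (r i)) = av z0 ^ b"
    proof -
      have "(\<Prod>i<b. av (r i)) = (\<Prod>i<b. av z0)"
        by (rule prod.cong) (use ORbe absOrb in auto)
      then show ?thesis by simp
    qed
    have z0mp: "minimal_period av f b z0" unfolding mp using b1 z0s z0p z0min by blast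
    show "\<exists>z0. minimal_period av f (q * p ^ n) z0 \<and>
           (\<forall>w. minimal_period av f (q * p ^ n) w \<longrightarrow> w \<in> orbit av f z0)"
      using z0mp allOrb orbit0 unfolding b_def[symmetric] by blast
    show "av w = av ((lam ^ (q * p ^ n) - 1) / (lam ^ (q * p ^ (n - 1)) - 1)) powr (1 / real (q * p ^ n))"
      if "minimal_period av f (q * p ^ n) w" for w
    proof -
      have "av w = av z0" using allOrb that absOrb unfolding b_def[symmetric] by blast
      moreover have "av ((lam ^ (q * p ^ n) - 1) / (lam ^ (q * p ^ (n - 1)) - 1)) = av z0 ^ b"
        using r(3) C0 prodr unfolding a_def[symmetric] b_def[symmetric] by simp
      ultimately show ?thesis using pow_powr[of "av z0" b] b1 unfolding b_def[symmetric] by simp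
    qed
  qed
qed



end
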